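(* Let $p$ be prime, $G=\mathbb{Z}_{p^2}\times\mathbb{Z}_p$, $c\in\mathbb{Z}_p$, and let $y_{ij},z_{ij}\in\mathbb{Z}_p$ ($0\le i,j\le p-1$) satisfy $y_{ij}+cz_{ij}\equiv j\pmod p$. Then the set $B=\{(i+py_{ij},z_{ij}):0\le i,j\le p-1\}\subset G$ is a tile of $G$ and also a spectral set.
   Context: Elements of $\mathbb{Z}_p$ are represented by $\{0,\dots,p-1\}$ and $i+py_{ij}$ is read in $\mathbb{Z}_{p^2}$. For $b=(b_1,b_2)\in G$ let $\chi_b(a_1,a_2)=e^{2\pi i(a_1b_1/p^2+a_2b_2/p)}$. $B$ is a spectral set if there is $\Lambda\subset G$ with $\{\chi_\lambda|_B:\lambda\in\Lambda\}$ an orthogonal basis of $L^2(B)$ (counting measure). $B$ is a tile if there is $T\subset G$ with $B\oplus T=G$ (every element of $G$ uniquely $b+t$, $b\in B,t\in T$). *)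

theory Defs
  imports Complex_Main "HOL-Computational_Algebra.Primes"
begin

definition grp :: "int \<Rightarrow> (int \<times> int) set" where
  "grp p = {0..<p^2} \<times> {0..<p}"

definition gadd :: "int \<Rightarrow> int \<times> int \<Rightarrow> int \<times> int \<Rightarrow> int \<times> int" where
  "gadd p a b = ((fst a + fst b) mod p^2, (snd a + snd b) mod p)"

definition chr :: "int \<Rightarrow> int \<times> int \<Rightarrow> int \<times> int \<Rightarrow> complex" where
  "chr p b a = exp (2 * of_real pi * \<i> *
      of_real (real_of_int (fst a * fst b) / real_of_int (p^2)
             + real_of_int (snd a * snd b) / real_of_int p))"

definition is_tile :: "int \<Rightarrow> (int \<times> int) set \<Rightarrow> bool" where
  "is_tile p B \<longleftrightarrow> (\<exists>T \<subseteq> grp p. \<forall>g \<in> grp p.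
      \<exists>!bt. fst bt \<in> B \<and> snd bt \<in> T \<and> gadd p (fst bt) (snd bt) = g)"

definition is_spectral :: "int \<Rightarrow> (int \<times> int) set \<Rightarrow> bool" where
  "is_spectral p B \<longleftrightarrow> (\<exists>\<Lambda> \<subseteq> grp p.
      (\<forall>l1 \<in> \<Lambda>. \<forall>l2 \<in> \<Lambda>. l1 \<noteq> l2 \<longrightarrow>
          (\<Sum>b\<in>B. chr p l1 b * cnj (chr p l2 b)) = 0) \<and>
      (\<forall>f :: int \<times> int \<Rightarrow> complex. \<exists>a :: int \<times> int \<Rightarrow> complex.
          \<forall>b \<in> B. f b = (\<Sum>l\<in>\<Lambda>. a l * chr p l b)))"

end

theory Submission imports Defs "HOL-Analysis.Complex_Transcendental" "HOL-Analysis.Complex_Transcendental" begin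

definition w :: "int \<Rightarrow> int \<Rightarrow> complex" where
  "w M n = exp (2 * of_real pi * \<i> * of_real (real_of_int n / real_of_int M))"

lemma w_add: "w M (a + b) = w M a * w M b"
  unfolding w_def by (simp add: exp_add[symmetric] add_divide_distrib algebra_simps)

lemma w_period: "M \<noteq> 0 \<Longrightarrow> w M (M * k) = 1"
proof -
  assume "M \<noteq> 0"
  hence "real_of_int (M*k) / real_of_int M = real_of_int k" by simp
  thus ?thesis unfolding w_def
    by (simp add: exp_eq_1)
qed

lemma w_cong: "M \<noteq> 0 \<Longrightarrow> M dvd (a - b) \<Longrightarrow> w M a = w M b"
proof -
  assume "M \<noteq> 0" "M dvd (a - b)"
  then obtain k where "a = b + M * k" by (metis add_diff_cancel_left' dvd_def diff_add_cancel add.commute)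
  thus ?thesis using w_add w_period \<open>M \<noteq> 0\<close> by simp
qed

lemma w_eq_1: "M > 0 \<Longrightarrow> w M d = 1 \<longleftrightarrow> M dvd d"
proof -
  assume M: "M > 0"
  have "w M d = 1 \<longleftrightarrow> (\<exists>n::int. 2 * pi * (real_of_int d / real_of_int M) = of_int (2 * n) * pi)"
    unfolding w_def by (simp add: exp_eq_1)
  also have "\<dots> \<longleftrightarrow> (\<exists>n::int. real_of_int d = real_of_int M * of_int n)"
    using M by (auto simp: field_simps)
  also have "\<dots> \<longleftrightarrow> M dvd d"
    by (metis dvd_def of_int_eq_iff of_int_mult)
  finally show ?thesis .
qed

lemma w_cnj: "cnj (w M a) = w M (- a)"
  unfolding w_def by (simp add: exp_cnj)

lemma w_pow: "w M (int k * d) = w M d ^ k"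
proof (induction k)
  case 0
  then show ?case by (simp add: w_def)
next
  case (Suc k)
  have "int (Suc k) * d = d + int k * d" by (simp add: algebra_simps)
  then show ?case using Suc by (simp add: w_add)
qed

lemma w_sum: assumes M: "M > 0"
  shows "(\<Sum>n\<in>{0..<M}. w M (n * d)) = (if M dvd d then of_int M else 0)"
proof -
  have eq: "{0..<M} = int ` {..<nat M}"
    using M by (auto simp: image_iff intro!: bexI[of _ "nat x" for x])
  have "(\<Sum>n\<in>{0..<M}. w M (n * d)) = (\<Sum>k<nat M. w M d ^ k)"
    unfolding eq by (simp add: sum.reindex w_pow)
  also have "\<dots> = (if M dvd d then of_int M else 0)"
  proof (cases "M dvd d")
    case True
    then have "w M d = 1" using M by (simp add: w_eq_1)
    then show ?thesis using M True by simp
  next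
    case False
    have "w M d ^ nat M = w M (int (nat M) * d)" by (simp only: w_pow)
    also have "\<dots> = 1" using M w_period[of M d] by simp
    finally show ?thesis using False M by (simp add: sum_gp_strict w_eq_1)
  qed
  finally show ?thesis .
qed


lemma digit_mod: "(0::int) \<le> a \<Longrightarrow> a < p \<Longrightarrow> (a + p*b) mod p = a"
  by simp

lemma digit_div: "(0::int) \<le> a \<Longrightarrow> a < p \<Longrightarrow> (a + p*b) div p = b"
  by simp

lemma digit_inj: "(0::int) \<le> a \<Longrightarrow> a < p \<Longrightarrow> 0 \<le> a' \<Longrightarrow> a' < p \<Longrightarrow> a + p*b = a' + p*b' \<Longrightarrow> a = a' \<and> b = b'"
  by (metis digit_div digit_mod)

lemma decomp: "(0::int) < p \<Longrightarrow> 0 \<le> i \<Longrightarrow> i < p \<Longrightarrow> (i + p*Y) mod p^2 = i + p*(Y mod p)"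
proof -
  assume p: "0 < p" "0 \<le> i" "i < p"
  have "(i + p*Y) mod (p*p) = p * ((i + p*Y) div p mod p) + (i + p*Y) mod p"
    using p by (intro zmod_zmult2_eq) simp
  thus ?thesis using p by (simp add: power2_eq_square)
qed

lemma div_lt: "0 < p \<Longrightarrow> n < p*p \<Longrightarrow> n div p < (p::int)"
proof -
  assume a: "0 < p" "n < p*p"
  have "p*(n div p) \<le> n" using a by (smt (verit) mult_div_mod_eq pos_mod_sign)
  hence "p*(n div p) < p*p" using a by linarith
  thus ?thesis using a by (simp add: mult_less_cancel_left_pos)
qed

lemma small_dvd: "(0::int) \<le> a \<Longrightarrow> a < M \<Longrightarrow> 0 \<le> b \<Longrightarrow> b < M \<Longrightarrow> M dvd (a - b) \<Longrightarrow> a = b"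
  by (metis mod_eq_dvd_iff mod_pos_pos_trivial)

lemma chr_w: "p > 0 \<Longrightarrow> chr p (m, q) (a1, a2) = w (p^2) (a1*m + p*a2*q)"
proof -
  assume p: "p > 0"
  have "real_of_int (a1 * m) / real_of_int (p^2) + real_of_int (a2 * q) / real_of_int p
      = real_of_int (a1*m + p*a2*q) / real_of_int (p^2)"
    using p by (simp add: field_simps power2_eq_square)
  thus ?thesis unfolding chr_def w_def by simp
qed

lemma uniq_core:
  fixes p c Y Z Y2 Z2 j j2 s s2 :: int
  assumes "p > 0" "0 \<le> j" "j < p" "0 \<le> j2" "j2 < p" "0 \<le> s" "s < p" "0 \<le> s2" "s2 < p"
    and h1: "(Y - c * s) mod p = (Y2 - c * s2) mod p"
    and h2: "(Z + s) mod p = (Z2 + s2) mod p"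
    and h3: "(Y + c*Z) mod p = j mod p" and h4: "(Y2 + c*Z2) mod p = j2 mod p"
  shows "j = j2"
proof -
  have d1: "p dvd (Y - c * s) - (Y2 - c * s2)" using h1 by (simp add: mod_eq_dvd_iff)
  have d2: "p dvd (Z + s) - (Z2 + s2)" using h2 by (simp add: mod_eq_dvd_iff)
  have d3: "p dvd (Y + c*Z) - j" using h3 by (simp add: mod_eq_dvd_iff)
  have d4: "p dvd (Y2 + c*Z2) - j2" using h4 by (simp add: mod_eq_dvd_iff)
  have "j - j2 = ((Y - c * s) - (Y2 - c * s2)) + c*((Z + s) - (Z2 + s2)) - ((Y + c*Z) - j) + ((Y2 + c*Z2) - j2)"
    by (simp add: algebra_simps)
  also have "p dvd \<dots>" by (rule dvd_add[OF dvd_diff[OF dvd_add[OF d1 dvd_mult[OF d2]] d3] d4])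
  finally show ?thesis using assms by (intro small_dvd[of j p j2]) auto
qed

theorem lemma5p5:
  fixes p c :: int and y z :: "nat \<Rightarrow> nat \<Rightarrow> int"
  assumes "prime p"
    and "c \<in> {0..<p}"
    and "\<And>i j. i < nat p \<Longrightarrow> j < nat p \<Longrightarrow> y i j \<in> {0..<p} \<and> z i j \<in> {0..<p}"
    and "\<And>i j. i < nat p \<Longrightarrow> j < nat p \<Longrightarrow> (y i j + c * z i j) mod p = int j mod p"
  defines "B \<equiv> {(int i + p * y i j, z i j) | i j. i < nat p \<and> j < nat p}"
  shows "is_tile p B \<and> is_spectral p B"
proof -
  have p0: "p > 0" using assms(1) prime_gt_0_int by blast
  have yz: "0 \<le> y i j" "y i j < p" "0 \<le> z i j" "z i j < p" if "i < nat p" "j < nat p" for i j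
    using assms(3)[OF that] by auto
  note cong = assms(4)
  define e where "e i j = (int i + p * y i j, z i j)" for i j
  have Be: "B = {e i j | i j. i < nat p \<and> j < nat p}" unfolding B_def e_def by simp
  define N where "N b = fst b mod p + p * ((fst b div p + c * snd b) mod p)" for b :: "int \<times> int"
  have Ne: "N (e i j) = int i + p * int j" if "i < nat p" "j < nat p" for i j
  proof -
    have "fst (e i j) mod p = int i" "fst (e i j) div p = y i j"
      unfolding e_def using that by auto
    moreover have "(y i j + c * z i j) mod p = int j" using cong[OF that] that by simp
    ultimately show ?thesis unfolding N_def e_def by simp
  qed
  have bijN: "bij_betw N B {0..<p^2}"
  proof (rule bij_betw_imageI)
    show "inj_on N B"
    proof
      fix b b' assume "b \<in> B" "b' \<in> B" "N b = N b'"
      then obtain i j i' j' where b: "b = e i j" "i < nat p" "j < nat p"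
          and b': "b' = e i' j'" "i' < nat p" "j' < nat p" unfolding Be by auto
      have "int i + p * int j = int i' + p * int j'" using \<open>N b = N b'\<close> b b' Ne by simp
      hence "int i = int i' \<and> int j = int j'" using b b' by (intro digit_inj[of _ p]) auto
      thus "b = b'" using b b' by simp
    qed
    show "N ` B = {0..<p^2}"
    proof
      show "N ` B \<subseteq> {0..<p^2}"
      proof
        fix n assume "n \<in> N ` B"
        then obtain i j where n: "n = int i + p * int j" "i < nat p" "j < nat p"
          unfolding Be using Ne by auto
        have "p * int j \<le> p * (p - 1)" using n p0 by (intro mult_left_mono) auto
        thus "n \<in> {0..<p^2}" using n p0 by (auto simp: power2_eq_square algebra_simps)
      qed
      show "{0..<p^2} \<subseteq> N ` B"
      proof
        fix n assume n: "n \<in> {0..<p^2}"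
        define i where "i = nat (n mod p)"
        define j where "j = nat (n div p)"
        have ij: "i < nat p" "j < nat p" unfolding i_def j_def using n p0
          by (auto simp: power2_eq_square nat_less_iff div_lt)
        have "0 \<le> n div p" using p0 n by (simp add: pos_imp_zdiv_nonneg_iff)
        hence "n = int i + p * int j" unfolding i_def j_def using p0 n by simp
        hence "n = N (e i j)" using Ne ij by simp
        moreover have "e i j \<in> B" unfolding Be using ij by auto
        ultimately show "n \<in> N ` B" by auto
      qed
    qed
  qed
  have Nrange: "N b \<in> {0..<p^2}" if "b \<in> B" for b using bijN that by (auto simp: bij_betw_def)
  have Ninj: "inj_on N B" using bijN by (auto simp: bij_betw_def)
  define L where "L m = (m, (c*m) mod p)" for m
  define Lam where "Lam = L ` {0..<p^2}"
  have injL: "inj_on L {0..<p^2}" by (auto simp: inj_on_def L_def)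
  have chrL: "chr p (L m) b = w (p^2) (N b * m)" if bB: "b \<in> B" for m b
  proof -
    obtain i j where b: "b = e i j" "i < nat p" "j < nat p" using bB Be by auto
    have "chr p (L m) b = w (p^2) ((int i + p*y i j)*m + p*z i j*((c*m) mod p))"
      unfolding L_def b e_def using chr_w p0 by simp
    also have "\<dots> = w (p^2) ((int i + p*int j) * m)"
    proof (rule w_cong)
      show "p^2 \<noteq> 0" using p0 by simp
      have "p dvd y i j + c*z i j - int j" using cong[OF b(2,3)] by (simp add: mod_eq_dvd_iff)
      then obtain k where k: "y i j + c*z i j - int j = p*k" by (auto simp: dvd_def)
      have md: "(c*m) mod p = c*m - p*((c*m) div p)" using mult_div_mod_eq[of p "c*m"] by linarith
      have "(int i + p*y i j)*m + p*z i j*((c*m) mod p) - (int i + p*int j)*m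
           = p*(m*(y i j + c*z i j - int j)) - p*p*(z i j*((c*m) div p))"
        unfolding md by (simp add: algebra_simps)
      also have "\<dots> = p^2 * (m*k - z i j*((c*m) div p))" unfolding k
        by (simp add: algebra_simps power2_eq_square)
      finally show "p^2 dvd (int i + p*y i j)*m + p*z i j*((c*m) mod p) - (int i + p*int j)*m"
        by simp
    qed
    also have "\<dots> = w (p^2) (N b * m)" using Ne b by simp
    finally show ?thesis .
  qed
  have p2: "p^2 > 0" using p0 by simp
  have orth: "(\<Sum>b\<in>B. chr p l1 b * cnj (chr p l2 b)) = 0"
    if ll: "l1 \<in> Lam" "l2 \<in> Lam" "l1 \<noteq> l2" for l1 l2
  proof -
    obtain m1 m2 where m: "l1 = L m1" "l2 = L m2" "m1 \<in> {0..<p^2}" "m2 \<in> {0..<p^2}"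
      using ll unfolding Lam_def by auto
    have "m1 \<noteq> m2" using m ll by auto
    have "(\<Sum>b\<in>B. chr p l1 b * cnj (chr p l2 b)) = (\<Sum>b\<in>B. w (p^2) (N b * (m1 - m2)))"
      by (rule sum.cong) (auto simp: m chrL w_cnj w_add[symmetric] algebra_simps)
    also have "\<dots> = (\<Sum>n\<in>{0..<p^2}. w (p^2) (n * (m1 - m2)))"
      by (rule sum.reindex_bij_betw[OF bijN])
    also have "\<dots> = 0"
    proof -
      have "\<not> p^2 dvd (m1 - m2)" using small_dvd[of m1 "p^2" m2] m \<open>m1 \<noteq> m2\<close> by auto
      thus ?thesis using w_sum[OF p2] by simp
    qed
    finally show ?thesis .
  qed
  have dual: "(\<Sum>l\<in>Lam. chr p l b0 * cnj (chr p l b)) = (if b = b0 then of_int (p^2) else 0)"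
    if "b0 \<in> B" "b \<in> B" for b0 b
  proof -
    have "(\<Sum>l\<in>Lam. chr p l b0 * cnj (chr p l b)) = (\<Sum>m\<in>{0..<p^2}. chr p (L m) b0 * cnj (chr p (L m) b))"
      unfolding Lam_def by (rule sum.reindex[OF injL, unfolded comp_def])
    also have "\<dots> = (\<Sum>m\<in>{0..<p^2}. w (p^2) (m * (N b0 - N b)))"
      by (rule sum.cong) (auto simp: that chrL w_cnj w_add[symmetric] algebra_simps)
    also have "\<dots> = (if p^2 dvd (N b0 - N b) then of_int (p^2) else 0)"
      by (rule w_sum[OF p2])
    also have "(p^2 dvd (N b0 - N b)) \<longleftrightarrow> b = b0"
    proof
      assume "p^2 dvd (N b0 - N b)"
      hence "N b0 = N b" using small_dvd[of "N b0" "p^2" "N b"] Nrange that by auto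
      thus "b = b0" using Ninj that by (auto simp: inj_on_def)
    qed simp
    finally show ?thesis .
  qed
  have spectral: "is_spectral p B"
    unfolding is_spectral_def
  proof (intro exI[of _ Lam] conjI allI ballI impI)
    show "Lam \<subseteq> grp p"
      unfolding Lam_def L_def grp_def using p0 by auto
    show "(\<Sum>b\<in>B. chr p l1 b * cnj (chr p l2 b)) = 0" if "l1 \<in> Lam" "l2 \<in> Lam" "l1 \<noteq> l2" for l1 l2
      using orth that by blast
    fix f :: "int \<times> int \<Rightarrow> complex"
    define a where "a l = (\<Sum>b\<in>B. f b * cnj (chr p l b)) / of_int (p^2)" for l
    show "\<exists>a. \<forall>b0\<in>B. f b0 = (\<Sum>l\<in>Lam. a l * chr p l b0)"
    proof (intro exI[of _ a] ballI)
      fix b0 assume b0: "b0 \<in> B"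
      have fin: "finite B" using bijN bij_betw_finite by blast
      have "(\<Sum>l\<in>Lam. a l * chr p l b0) = (\<Sum>l\<in>Lam. \<Sum>b\<in>B. f b * (chr p l b0 * cnj (chr p l b)) / of_int (p^2))"
        unfolding a_def sum_divide_distrib sum_distrib_right
        by (intro sum.cong refl) (simp add: algebra_simps)
      also have "\<dots> = (\<Sum>b\<in>B. f b * (\<Sum>l\<in>Lam. chr p l b0 * cnj (chr p l b)) / of_int (p^2))"
        by (subst sum.swap) (simp add: sum_divide_distrib sum_distrib_left)
      also have "\<dots> = (\<Sum>b\<in>B. if b = b0 then f b0 else 0)"
        by (rule sum.cong) (use b0 dual p0 in auto)
      also have "\<dots> = f b0" using b0 fin by simp
      finally show "f b0 = (\<Sum>l\<in>Lam. a l * chr p l b0)" by simp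
    qed
  qed
  define tt where "tt s = (p*((-c* s) mod p), s)" for s
  define T where "T = tt ` {0..<p}"
  have gform: "gadd p (e i j) (tt s) = (int i + p*((y i j - c* s) mod p), (z i j + s) mod p)"
    if ij: "i < nat p" "j < nat p" for i j s
  proof -
    have "(int i + p * y i j + p*((-c* s) mod p)) mod p^2 = (int i + p*(y i j + (-c* s) mod p)) mod p^2"
      by (simp add: algebra_simps)
    also have "\<dots> = int i + p*((y i j + (-c* s) mod p) mod p)"
      using ij p0 by (intro decomp) auto
    also have "(y i j + (-c* s) mod p) mod p = (y i j - c* s) mod p"
      by (simp add: mod_add_right_eq)
    finally show ?thesis unfolding gadd_def e_def tt_def by simp
  qed
  have Tsub: "T \<subseteq> grp p"
  proof
    fix t assume "t \<in> T"
    then obtain s where s: "t = tt s" "s \<in> {0..<p}" unfolding T_def by auto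
    have r: "0 \<le> (-c* s) mod p" "(-c* s) mod p \<le> p - 1" using p0 by auto
    have "p * ((-c* s) mod p) \<le> p*(p-1)" using r p0 by (intro mult_left_mono) auto
    thus "t \<in> grp p" using s r p0 unfolding tt_def grp_def by (auto simp: power2_eq_square algebra_simps)
  qed
  define P where "P g bt \<longleftrightarrow> fst bt \<in> B \<and> snd bt \<in> T \<and> gadd p (fst bt) (snd bt) = g" for g bt
  have uniq: "bt = bt2" if "P g bt" "P g bt2" for g bt bt2
  proof -
    obtain i j s where a: "fst bt = e i j" "i < nat p" "j < nat p" "snd bt = tt s" "s \<in> {0..<p}"
      using \<open>P g bt\<close> unfolding P_def Be T_def by auto
    obtain i2 j2 s2 where a2: "fst bt2 = e i2 j2" "i2 < nat p" "j2 < nat p" "snd bt2 = tt s2" "s2 \<in> {0..<p}"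
      using \<open>P g bt2\<close> unfolding P_def Be T_def by auto
    have eq: "gadd p (e i j) (tt s) = gadd p (e i2 j2) (tt s2)"
      using \<open>P g bt\<close> \<open>P g bt2\<close> a a2 unfolding P_def by simp
    hence e1: "int i + p*((y i j - c* s) mod p) = int i2 + p*((y i2 j2 - c* s2) mod p)"
      and e2: "(z i j + s) mod p = (z i2 j2 + s2) mod p"
      using gform a a2 by auto
    have "int i = int i2 \<and> (y i j - c* s) mod p = (y i2 j2 - c* s2) mod p"
      using a a2 p0 by (intro digit_inj[OF _ _ _ _ e1]) auto
    hence ii: "i2 = i" and e1': "(y i j - c* s) mod p = (y i j2 - c* s2) mod p" by auto
    have e2': "(z i j + s) mod p = (z i j2 + s2) mod p" using e2 ii by simp
    have "int j = int j2"
      using a a2 p0 ii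
      by (intro uniq_core[OF p0 _ _ _ _ _ _ _ _ e1' e2' cong cong]) auto
    hence jj: "j2 = j" by simp
    have "p dvd (z i j + s) - (z i j + s2)" using e2' jj by (simp add: mod_eq_dvd_iff)
    hence "p dvd s - s2" by simp
    hence "s = s2" using a a2 by (intro small_dvd[of s p s2]) auto
    thus ?thesis using a a2 ii jj by (metis prod.collapse)
  qed
  have exi: "\<exists>bt. P g bt" if g: "g \<in> grp p" for g
  proof -
    obtain a1 a2 where g': "g = (a1, a2)" "0 \<le> a1" "a1 < p^2" "0 \<le> a2" "a2 < p"
      using g unfolding grp_def by auto
    define y0 where "y0 = a1 div p"
    define i where "i = nat (a1 mod p)"
    define j where "j = nat ((y0 + c*a2) mod p)"
    have ij: "i < nat p" "j < nat p" unfolding i_def j_def using p0 by auto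
    define s where "s = (a2 - z i j) mod p"
    have y0r: "0 \<le> y0" "y0 < p" unfolding y0_def using g' p0
      by (auto simp: pos_imp_zdiv_nonneg_iff div_lt power2_eq_square)
    have D1: "p dvd y i j + c * z i j - int j" using cong[OF ij] by (simp add: mod_eq_dvd_iff)
    have D2: "p dvd int j - (y0 + c*a2)" unfolding j_def using p0
      by (simp add: mod_eq_dvd_iff[symmetric])
    have D3: "p dvd s - (a2 - z i j)" unfolding s_def by (simp add: mod_eq_dvd_iff[symmetric])
    have "y i j - c* s - y0 = (y i j + c * z i j - int j) + (int j - (y0 + c*a2)) - c*(s - (a2 - z i j))"
      by (simp add: algebra_simps)
    also have "p dvd \<dots>" by (rule dvd_diff[OF dvd_add[OF D1 D2] dvd_mult[OF D3]])
    finally have "(y i j - c* s) mod p = y0 mod p" by (simp add: mod_eq_dvd_iff)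
    hence f1: "(y i j - c* s) mod p = y0" using y0r by simp
    have "z i j + s - a2 = s - (a2 - z i j)" by simp
    hence "p dvd z i j + s - a2" using D3 by metis
    hence "(z i j + s) mod p = a2 mod p" by (simp add: mod_eq_dvd_iff)
    hence f2: "(z i j + s) mod p = a2" using g' by simp
    have f0: "int i + p*y0 = a1" unfolding i_def y0_def using p0 by simp
    have "gadd p (e i j) (tt s) = g" using gform[OF ij] f1 f2 f0 g' by simp
    moreover have "e i j \<in> B" unfolding Be using ij by auto
    moreover have "tt s \<in> T" unfolding T_def s_def using p0 by auto
    ultimately show ?thesis unfolding P_def by (intro exI[of _ "(e i j, tt s)"]) simp
  qed
  have tile: "is_tile p B"
    unfolding is_tile_def
  proof (intro exI[of _ T] conjI ballI Tsub)
    fix g assume "g \<in> grp p"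
    then obtain bt where "P g bt" using exi by blast
    thus "\<exists>!bt. fst bt \<in> B \<and> snd bt \<in> T \<and> gadd p (fst bt) (snd bt) = g"
      using uniq unfolding P_def by blast
  qed
  show ?thesis using spectral tile by simp
qed

end
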